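(* Let $G$ be a finite simple graph, let $t<0$ and $k>0$ be integers, and write $k=i-mt$ with integers $m\ge 0$ and $1\le i\le -t$. Consider the following procedure: set $H:=G$; for $j=0,1,\ldots,m$ (in this order), let $H$ be replaced by the subgraph of $H$ induced by those vertices whose degree in the current graph $H$ is at least $i-jt$ (i.e., all vertices of degree smaller than $i-jt$ in $H$ are deleted simultaneously); output the final $H$. Let $G_0\ge G_1\ge G_2\ge\cdots$ be the maximal D-chain of order $t$ of $G$ (with $G_r=\emptyset$ for $r$ larger than its length). Then the output $H$ equals $G_k$.
   Context: All graphs are finite, without loops or multiple edges. For graphs $H,G$ write $H\le G$ if $H$ is a subgraph of $G$, and $H<G$ if $H\le G$ and $H\ne G$. Let $t$ be an integer. A D-chain of order $t$ of $G$ is a chain $L\colon G_0\ge G_1\ge\cdots\ge G_k$ of nonempty subgraphs of $G$ with $G_0=G$, where $G_i$ is a vertex-induced subgraph of $G_{i-1}$ for $1\le i\le k$, such that for every $0\le i\le k$, every vertex $v$ of $G_i$ has at least $i$ neighbors in $G_j$, where $j=\max\{0,i+t\}$. The number $k$ is the length of the chain. A D-chain $L\colon G_0\ge\cdots\ge G_k$ of order $t$ is maximal if (i) there is no D-chain of order $t$ of $G$ of length greater than $k$, and (ii) there is no D-chain $L'\colon G'_0\ge\cdots\ge G'_k$ of order $t$ of $G$ with $G_i<G'_i$ for some $1\le i\le k$. For $t\le 0$ the maximal D-chain of order $t$ exists and is unique. *)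

theory Defs
  imports Main
begin

text \<open>A finite simple graph: finite vertex set V, symmetric irreflexive edge
relation E on V. All D-chain members are induced subgraphs of G, so they are
represented by their vertex sets.\<close>

definition simple_graph :: "'a set \<Rightarrow> ('a \<Rightarrow> 'a \<Rightarrow> bool) \<Rightarrow> bool" where
  "simple_graph V E \<longleftrightarrow> finite V \<and> (\<forall>u v. E u v \<longrightarrow> u \<in> V \<and> v \<in> V)
     \<and> (\<forall>u v. E u v \<longrightarrow> E v u) \<and> (\<forall>v. \<not> E v v)"

definition nbrs :: "('a \<Rightarrow> 'a \<Rightarrow> bool) \<Rightarrow> 'a set \<Rightarrow> 'a \<Rightarrow> 'a set" where
  "nbrs E S v = {u \<in> S. E v u}"

definition D_chain :: "'a set \<Rightarrow> ('a \<Rightarrow> 'a \<Rightarrow> bool) \<Rightarrow> int \<Rightarrow> (nat \<Rightarrow> 'a set) \<Rightarrow> nat \<Rightarrow> bool" where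
  "D_chain V E t C len \<longleftrightarrow>
     C 0 = V \<and> (\<forall>r \<le> len. C r \<noteq> {})
     \<and> (\<forall>r. 1 \<le> r \<and> r \<le> len \<longrightarrow> C r \<subseteq> C (r - 1))
     \<and> (\<forall>r > len. C r = {})
     \<and> (\<forall>r \<le> len. \<forall>v \<in> C r. r \<le> card (nbrs E (C (nat (max 0 (int r + t)))) v))"

definition maximal_D_chain :: "'a set \<Rightarrow> ('a \<Rightarrow> 'a \<Rightarrow> bool) \<Rightarrow> int \<Rightarrow> (nat \<Rightarrow> 'a set) \<Rightarrow> nat \<Rightarrow> bool" where
  "maximal_D_chain V E t C len \<longleftrightarrow>
     D_chain V E t C len
     \<and> (\<forall>C' len'. D_chain V E t C' len' \<longrightarrow> len' \<le> len)
     \<and> \<not> (\<exists>C'. D_chain V E t C' len \<and> (\<exists>r. 1 \<le> r \<and> r \<le> len \<and> C r \<subset> C' r))"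

definition prune :: "('a \<Rightarrow> 'a \<Rightarrow> bool) \<Rightarrow> 'a set \<Rightarrow> int \<Rightarrow> 'a set" where
  "prune E H d = {v \<in> H. d \<le> int (card (nbrs E H v))}"

fun prune_steps :: "'a set \<Rightarrow> ('a \<Rightarrow> 'a \<Rightarrow> bool) \<Rightarrow> int \<Rightarrow> int \<Rightarrow> nat \<Rightarrow> 'a set" where
  "prune_steps V E i t 0 = prune E V i"
| "prune_steps V E i t (Suc j) = prune E (prune_steps V E i t j) (i - int (Suc j) * t)"

end

theory Submission
  imports Defs
begin

fun Dc :: "'a set \<Rightarrow> ('a \<Rightarrow> 'a \<Rightarrow> bool) \<Rightarrow> nat \<Rightarrow> nat \<Rightarrow> 'a set" where
  "Dc V E p 0 = V"
| "Dc V E p (Suc n) = prune E (Dc V E p (n - p)) (int (Suc n))"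

lemma prune_sub: "prune E H d \<subseteq> H"
  unfolding prune_def by auto

lemma prune_mono:
  assumes "finite H'" "H \<subseteq> H'" "d' \<le> d"
  shows "prune E H d \<subseteq> prune E H' d'"
proof
  fix v assume v: "v \<in> prune E H d"
  have "card (nbrs E H v) \<le> card (nbrs E H' v)"
    using assms unfolding nbrs_def by (intro card_mono) auto
  then show "v \<in> prune E H' d'" using v assms unfolding prune_def by auto
qed

lemma Dc_Suc_sub:
  assumes "finite V"
  shows "Dc V E p (Suc n) \<subseteq> Dc V E p n \<and> Dc V E p n \<subseteq> V"
proof (induction n rule: less_induct)
  case (less n)
  show ?case
  proof (cases n)
    case 0
    then show ?thesis using prune_sub[of E V 1] by auto
  next
    case (Suc n')
    have IH: "\<And>m. m < n \<Longrightarrow> Dc V E p (Suc m) \<subseteq> Dc V E p m \<and> Dc V E p m \<subseteq> V"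
      using less by blast
    have sub1: "Dc V E p (Suc n' - p) \<subseteq> Dc V E p (n' - p)"
    proof (cases "p \<le> n'")
      case True
      then have "Suc n' - p = Suc (n' - p)" by simp
      then show ?thesis using IH[of "n' - p"] Suc by auto
    next
      case False
      then show ?thesis by simp
    qed
    have v: "Dc V E p (n' - p) \<subseteq> V"
    proof (cases "n' - p")
      case 0 then show ?thesis by simp
    next
      case (Suc q)
      have "q < n" using Suc \<open>n = Suc n'\<close> by simp
      from IH[OF this] have "Dc V E p (Suc q) \<subseteq> V" by blast
      then show ?thesis using Suc by simp
    qed
    have "Dc V E p (Suc n) \<subseteq> Dc V E p n"
      using Suc sub1 v assms
      by (simp del: Dc.simps(1)) (rule prune_mono, auto intro: finite_subset)
    moreover have "Dc V E p n \<subseteq> V" using Suc v prune_sub by (metis Dc.simps(2) order_trans)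
    ultimately show ?thesis by blast
  qed
qed

lemma Dc_anti:
  assumes "finite V" "a \<le> b"
  shows "Dc V E p b \<subseteq> Dc V E p a"
proof (rule lift_Suc_antimono_le[of "Dc V E p"])
  fix n show "Dc V E p (Suc n) \<subseteq> Dc V E p n" using Dc_Suc_sub[OF assms(1), of E p n] by (rule conjunct1)
qed (rule assms(2))

lemma Dc_V: "finite V \<Longrightarrow> Dc V E p n \<subseteq> V"
  using Dc_Suc_sub[of V E p n] by (rule conjunct2)

lemma idx: "t = - int (Suc p) \<Longrightarrow> nat (max 0 (int r + t)) = r - Suc p"
  by auto

lemma chain_anti:
  assumes "D_chain V E t C' L" "a \<le> b"
  shows "C' b \<subseteq> C' a"
proof -
  have "\<And>n. C' (Suc n) \<subseteq> C' n"
  proof -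
    fix n
    show "C' (Suc n) \<subseteq> C' n"
    proof (cases "Suc n \<le> L")
      case True then show ?thesis using assms(1) unfolding D_chain_def
        by (metis diff_Suc_1 le_add1 plus_1_eq_Suc)
    next
      case False then show ?thesis using assms(1) unfolding D_chain_def by auto
    qed
  qed
  then show ?thesis using assms(2) by (rule lift_Suc_antimono_le)
qed

lemma chain_le_Dc:
  assumes fin: "finite V" and t: "t = - int (Suc p)" and ch: "D_chain V E t C' L"
  shows "C' r \<subseteq> Dc V E p r"
proof (induction r rule: less_induct)
  case (less r)
  show ?case
  proof (cases r)
    case 0 then show ?thesis using ch unfolding D_chain_def by simp
  next
    case (Suc n)
    show ?thesis
    proof (cases "r \<le> L")
      case False then show ?thesis using ch unfolding D_chain_def by (simp add: not_le)
    next
      case True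
      show ?thesis
      proof
        fix v assume v: "v \<in> C' r"
        have dg: "\<forall>r \<le> L. \<forall>v \<in> C' r. r \<le> card (nbrs E (C' (nat (max 0 (int r + t)))) v)"
          using ch unfolding D_chain_def by blast
        have deg: "r \<le> card (nbrs E (C' (r - Suc p)) v)"
        proof -
          have "r \<le> card (nbrs E (C' (nat (max 0 (int r + t)))) v)"
            using dg True v by blast
          then show ?thesis unfolding idx[OF t, of r] .
        qed
        have s1: "C' (r - Suc p) \<subseteq> Dc V E p (r - Suc p)"
          using less[of "r - Suc p"] Suc by simp
        have cle: "card (nbrs E (C' (r - Suc p)) v) \<le> card (nbrs E (Dc V E p (r - Suc p)) v)"
        proof (rule card_mono)
          have "nbrs E (Dc V E p (r - Suc p)) v \<subseteq> Dc V E p (r - Suc p)"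
            unfolding nbrs_def by blast
          also have "\<dots> \<subseteq> V" by (rule Dc_V[OF fin])
          finally show "finite (nbrs E (Dc V E p (r - Suc p)) v)"
            using fin by (rule finite_subset)
          show "nbrs E (C' (r - Suc p)) v \<subseteq> nbrs E (Dc V E p (r - Suc p)) v"
            using s1 unfolding nbrs_def by blast
        qed
        have "r - Suc p \<le> r" by (rule diff_le_self)
        then have "C' r \<subseteq> C' (r - Suc p)" by (rule chain_anti[OF ch])
        then have "v \<in> C' (r - Suc p)" using v by blast
        then have vD: "v \<in> Dc V E p (r - Suc p)" using s1 by blast
        have rn: "r - Suc p = n - p" using Suc by simp
        have "r \<le> card (nbrs E (Dc V E p (r - Suc p)) v)" using deg cle by (rule le_trans)
        then have "r \<le> card (nbrs E (Dc V E p (n - p)) v)" unfolding rn .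
        then have "int (Suc n) \<le> int (card (nbrs E (Dc V E p (n - p)) v))"
          using Suc by (simp only: of_nat_le_iff)
        then have "v \<in> prune E (Dc V E p (n - p)) (int (Suc n))"
          using vD unfolding rn prune_def by blast
        then show "v \<in> Dc V E p r" unfolding Suc Dc.simps(2) .
      qed
    qed
  qed
qed

lemma trunc_chain:
  assumes fin: "finite V" and t: "t = - int (Suc p)" and ne: "Dc V E p L \<noteq> {}"
  shows "D_chain V E t (\<lambda>r. if r \<le> L then Dc V E p r else {}) L"
  unfolding D_chain_def
proof (intro conjI allI impI ballI)
  show "(if 0 \<le> L then Dc V E p 0 else {}) = V" by simp
next
  fix r assume "r \<le> L"
  have "Dc V E p L \<subseteq> Dc V E p r" using Dc_anti[OF fin \<open>r \<le> L\<close>, of E p] .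
  then have "Dc V E p r \<noteq> {}" using ne by blast
  then show "(if r \<le> L then Dc V E p r else {}) \<noteq> {}"
    using \<open>r \<le> L\<close> by (simp del: Dc.simps)
next
  fix r assume rr: "1 \<le> r \<and> r \<le> L"
  then have "r - 1 \<le> L" by arith
  with rr show "(if r \<le> L then Dc V E p r else {}) \<subseteq> (if r - 1 \<le> L then Dc V E p (r - 1) else {})"
    using Dc_anti[OF fin, of "r - 1" r E p] by (simp del: Dc.simps)
next
  fix r assume "L < r" then show "(if r \<le> L then Dc V E p r else {}) = {}" by (simp del: Dc.simps)
next
  fix r v assume r: "r \<le> L" and v: "v \<in> (if r \<le> L then Dc V E p r else {})"
  show "r \<le> card (nbrs E (if nat (max 0 (int r + t)) \<le> L then Dc V E p (nat (max 0 (int r + t))) else {}) v)"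
  proof (cases r)
    case 0 then show ?thesis by (simp only: le0)
  next
    case (Suc n)
    have i: "nat (max 0 (int r + t)) = n - p" using idx[OF t, of r] Suc by simp
    have "n - p \<le> L" using r Suc by simp
    have "v \<in> prune E (Dc V E p (n - p)) (int (Suc n))" using v r Suc by simp
    then have "r \<le> card (nbrs E (Dc V E p (n - p)) v)" using Suc by (simp add: prune_def)
    moreover have "(if n - p \<le> L then Dc V E p (n - p) else {}) = Dc V E p (n - p)"
      using \<open>n - p \<le> L\<close> by (rule if_P)
    ultimately show ?thesis unfolding i by (simp only:)
  qed
qed

theorem theorem1:
  fixes V :: "'a set" and E :: "'a \<Rightarrow> 'a \<Rightarrow> bool"
    and t i :: int and k m len :: nat and C :: "nat \<Rightarrow> 'a set"
  assumes "simple_graph V E"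
    and "t < 0" and "k > 0"
    and "int k = i - int m * t" and "1 \<le> i" and "i \<le> - t"
    and "maximal_D_chain V E t C len"
  shows "prune_steps V E i t m = C k"
proof -
  have fin: "finite V" using assms(1) unfolding simple_graph_def by auto
  define p where "p = nat (- t) - 1"
  have t: "t = - int (Suc p)" using assms(2) unfolding p_def by auto
  have ch: "D_chain V E t C len" and lmax: "\<And>C' L. D_chain V E t C' L \<Longrightarrow> L \<le> len"
    and nomax: "\<not> (\<exists>C'. D_chain V E t C' len \<and> (\<exists>r. 1 \<le> r \<and> r \<le> len \<and> C r \<subset> C' r))"
    using assms(7) unfolding maximal_D_chain_def by auto
  have sub: "\<And>r. C r \<subseteq> Dc V E p r" using chain_le_Dc[OF fin t ch] .
  have "C len \<noteq> {}" using ch unfolding D_chain_def by blast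
  then have ne: "Dc V E p len \<noteq> {}" using sub[of len] by blast
  have tc: "D_chain V E t (\<lambda>r. if r \<le> len then Dc V E p r else {}) len"
    using trunc_chain[OF fin t ne] .
  have eq1: "\<And>r. r \<le> len \<Longrightarrow> C r = Dc V E p r"
  proof -
    fix r assume r: "r \<le> len"
    show "C r = Dc V E p r"
    proof (cases "r = 0")
      case True then show ?thesis using ch unfolding D_chain_def by simp
    next
      case False
      show ?thesis
      proof (rule ccontr)
        assume "C r \<noteq> Dc V E p r"
        then have "C r \<subset> (\<lambda>r. if r \<le> len then Dc V E p r else {}) r" using sub[of r] r by (simp del: Dc.simps)
        moreover have "1 \<le> r" using False by simp
        ultimately show False using nomax tc r by blast
      qed
    qed
  qed
  have e: "Dc V E p (Suc len) = {}"
  proof (rule ccontr)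
    assume "Dc V E p (Suc len) \<noteq> {}"
    from lmax[OF trunc_chain[OF fin t this]] show False by simp
  qed
  have eq2: "\<And>r. len < r \<Longrightarrow> C r = Dc V E p r"
  proof -
    fix r assume "len < r"
    then have "Suc len \<le> r" by simp
    then have "Dc V E p r = {}" using Dc_anti[OF fin, of "Suc len" r E p] e by blast
    moreover have "C r = {}" using ch \<open>len < r\<close> unfolding D_chain_def by blast
    ultimately show "C r = Dc V E p r" by simp
  qed
  have CD: "C r = Dc V E p r" for r using eq1[of r] eq2[of r] by (cases "r \<le> len") (simp_all del: Dc.simps)
  have ps: "prune_steps V E i t j = Dc V E p (nat i + j * Suc p)" for j
  proof (induction j)
    case 0
    have "nat i \<ge> 1" "nat i \<le> Suc p" using assms(5,6) t by auto
    then obtain n where n: "nat i = Suc n" "n \<le> p" by (cases "nat i") auto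
    have "i = int (Suc n)" proof -
      have "i = int (nat i)" using assms(5) by simp
      then show ?thesis using n(1) by simp
    qed
    have a: "nat i + 0 * Suc p = Suc n" using n by simp
    have b: "n - p = 0" using n by simp
    have "Dc V E p (nat i + 0 * Suc p) = prune E (Dc V E p (n - p)) (int (Suc n))"
      unfolding a by (rule Dc.simps(2))
    also have "\<dots> = prune E V i" unfolding b \<open>i = int (Suc n)\<close> by simp
    finally show ?case by simp
  next
    case (Suc j)
    have "nat i \<ge> 1" using assms(5) by auto
    then obtain n where n: "nat i = Suc n" by (cases "nat i") auto
    have e1: "nat i + Suc j * Suc p = Suc (n + Suc j * Suc p)" using n by simp
    have e2: "(n + Suc j * Suc p) - p = nat i + j * Suc p" using n by simp
    have e3: "int (Suc (n + Suc j * Suc p)) = i - int (Suc j) * t"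
    proof -
      have "i = int (nat i)" using assms(5) by simp
      then have hi: "i = int (Suc n)" using n by simp
      show ?thesis unfolding hi t by (simp add: algebra_simps)
    qed
    have "Dc V E p (nat i + Suc j * Suc p) = Dc V E p (Suc (n + Suc j * Suc p))"
      using e1 by (simp only:)
    also have "\<dots> = prune E (Dc V E p ((n + Suc j * Suc p) - p)) (int (Suc (n + Suc j * Suc p)))"
      by (rule Dc.simps(2))
    also have "\<dots> = prune E (prune_steps V E i t j) (i - int (Suc j) * t)"
      using e2 e3 Suc.IH by (simp only:)
    finally show ?case by simp
  qed
  have "int k = int (nat i) + int m * int (Suc p)" using assms(4,5) t by (simp add: algebra_simps)
  then have "int k = int (nat i + m * Suc p)" by (simp only: of_nat_add of_nat_mult)
  then have kk: "k = nat i + m * Suc p" by (simp only: of_nat_eq_iff)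
  have "C k = Dc V E p (nat i + m * Suc p)" using CD[of k] unfolding kk .
  then show ?thesis using ps[of m] by (simp only:)
qed

end
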